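(* Let $A\in\mathrm{SL}(n,\mathbb{C})$ have Jordan canonical form consisting of Jordan blocks $J(\lambda_1,n_1),\dots,J(\lambda_k,n_k)$ (with all $\lambda_i\neq 0$). Then $A$ is $c$-reversible if and only if this collection of blocks can be partitioned into pairs $\{J(\lambda,m),J(\overline{\lambda}^{-1},m)\}$ with $\lambda\in\mathbb{C}\setminus\{0\}$, $|\lambda|\neq 1$, and singletons $\{J(\mu,m)\}$ with $|\mu|=1$.
   Context: $J(\lambda,m)$ denotes the $m\times m$ Jordan block with eigenvalue $\lambda$ ($\lambda$ on the diagonal, $1$ on the superdiagonal, $0$ elsewhere). $\overline{g}$ denotes entrywise complex conjugation. $g\in\mathrm{SL}(n,\mathbb{C})$ is $c$-reversible if there exists $h\in\mathrm{SL}(n,\mathbb{C})$ with $hgh^{-1}=\overline{g}^{-1}$. *)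

theory Defs
  imports Complex_Main "Jordan_Normal_Form.Jordan_Normal_Form" "HOL-Library.Disjoint_Sets"
begin

definition conj_mat :: "complex mat \<Rightarrow> complex mat" where
  "conj_mat A = map_mat cnj A"

definition SL :: "nat \<Rightarrow> complex mat set" where
  "SL n = {A. A \<in> carrier_mat n n \<and> det A = 1}"

definition c_reversible :: "nat \<Rightarrow> complex mat \<Rightarrow> bool" where
  "c_reversible n g \<longleftrightarrow>
     (\<exists>h hinv ginv. h \<in> SL n \<and> hinv \<in> carrier_mat n n \<and> ginv \<in> carrier_mat n n \<and>
        h * hinv = 1\<^sub>m n \<and> hinv * h = 1\<^sub>m n \<and>
        ginv * conj_mat g = 1\<^sub>m n \<and> conj_mat g * ginv = 1\<^sub>m n \<and>
        h * g * hinv = ginv)"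

text \<open>The list of Jordan blocks (size, eigenvalue) can be partitioned into pairs
  {J(lambda,m), J(1/conj lambda, m)} with |lambda| \<noteq> 1 and singletons {J(mu,m)}
  with |mu| = 1.  Blocks are referred to by their index in the list.\<close>
definition blocks_pair_partition :: "(nat \<times> complex) list \<Rightarrow> bool" where
  "blocks_pair_partition n_as \<longleftrightarrow>
     (\<exists>P. partition_on {..<length n_as} P \<and>
        (\<forall>S\<in>P.
           (\<exists>i. S = {i} \<and> cmod (snd (n_as ! i)) = 1) \<or>
           (\<exists>i j. S = {i, j} \<and> i \<noteq> j \<and> fst (n_as ! j) = fst (n_as ! i) \<and>
                  snd (n_as ! i) \<noteq> 0 \<and> cmod (snd (n_as ! i)) \<noteq> 1 \<and>
                  snd (n_as ! j) = inverse (cnj (snd (n_as ! i))))))"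

end

theory Submission imports Defs "Jordan_Normal_Form.Jordan_Normal_Form_Uniqueness" "Jordan_Normal_Form.Jordan_Normal_Form_Existence"
begin

definition finv :: "nat \<times> complex \<Rightarrow> nat \<times> complex" where
  "finv x = (fst x, inverse (cnj (snd x)))"

definition goodpart :: "('i \<Rightarrow> nat \<times> complex) \<Rightarrow> 'i set \<Rightarrow> bool" where
  "goodpart g S \<longleftrightarrow>
           (\<exists>i. S = {i} \<and> cmod (snd (g i)) = 1) \<or>
           (\<exists>i j. S = {i, j} \<and> i \<noteq> j \<and> fst (g j) = fst (g i) \<and>
                  snd (g i) \<noteq> 0 \<and> cmod (snd (g i)) \<noteq> 1 \<and>
                  snd (g j) = inverse (cnj (snd (g i))))"

lemma cmod1_fix: assumes "cmod a = 1" shows "inverse (cnj a) = a"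
proof -
  have "complex_of_real ((cmod a)^2) = a * cnj a" by (rule complex_norm_square)
  hence "a * cnj a = 1" using assms by simp
  hence "cnj a * a = 1" by (simp add: mult.commute)
  thus ?thesis by (rule inverse_unique)
qed

lemma fix_cmod1: assumes "inverse (cnj a) = a" "a \<noteq> 0" shows "cmod a = 1"
proof -
  have "cnj a \<noteq> 0" using assms by auto
  hence "cnj a * a = 1" using assms(1) by (metis right_inverse)
  hence "a * cnj a = 1" by (simp add: mult.commute)
  hence "(cmod a)^2 = 1" using complex_mod_mult_cnj[of a] by simp
  thus ?thesis using norm_ge_zero[of a] by (auto simp add: power2_eq_1_iff)
qed

lemma good_inv:
  assumes "goodpart g S"
  shows "image_mset (\<lambda>x. finv (g x)) (mset_set S) = image_mset g (mset_set S)"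
  using assms unfolding goodpart_def
proof (elim disjE exE conjE)
  fix i assume "S = {i}" "cmod (snd (g i)) = 1"
  thus ?thesis by (simp add: finv_def cmod1_fix prod_eq_iff)
next
  fix i j assume *: "S = {i, j}" "i \<noteq> j" "fst (g j) = fst (g i)" "snd (g i) \<noteq> 0"
     "snd (g j) = inverse (cnj (snd (g i)))"
  have 1: "finv (g i) = g j" using * by (simp add: finv_def prod_eq_iff)
  have 2: "finv (g j) = g i" using * by (simp add: finv_def prod_eq_iff)
  show ?thesis using * 1 2 by auto
qed

lemma comb_dir1:
  assumes "finite P" "partition_on I P" "\<forall>S\<in>P. goodpart g S" "finite I"
  shows "image_mset (\<lambda>x. finv (g x)) (mset_set I) = image_mset g (mset_set I)"
  using assms
proof (induct P arbitrary: I rule: finite_induct)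
  case empty
  then show ?case by (simp add: partition_on_def)
next
  case (insert S P)
  have disj: "disjnt S (\<Union>P)"
    using insert.prems(1) insert.hyps(2) unfolding partition_on_def disjoint_def disjnt_def
    by (auto simp: pairwise_def disjnt_def) 
  from partition_on_insert[OF disj] insert.prems(1)
  have p: "partition_on (I - S) P" "S \<subseteq> I" by auto
  have fS: "finite S" using p(2) insert.prems(3) finite_subset by auto
  have IH: "image_mset (\<lambda>x. finv (g x)) (mset_set (I - S)) = image_mset g (mset_set (I - S))"
    using insert.hyps(3)[OF p(1)] insert.prems by auto
  have split: "mset_set I = mset_set S + mset_set (I - S)"
    using p(2) fS insert.prems(3)
    by (metis Diff_disjoint Diff_partition finite_Diff mset_set_Union)
  show ?case unfolding split image_mset_union IH using good_inv insert.prems(2) by auto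
qed

lemma comb_dir2:
  assumes "finite I" "\<forall>i\<in>I. snd (g i) \<noteq> 0"
    "image_mset (\<lambda>x. finv (g x)) (mset_set I) = image_mset g (mset_set I)"
  shows "\<exists>P. partition_on I P \<and> (\<forall>S\<in>P. goodpart g S)"
  using assms
proof (induct I rule: finite_psubset_induct)
  case (psubset I)
  show ?case
  proof (cases "I = {}")
    case True
    then show ?thesis by (auto simp: partition_on_empty)
  next
    case False
    then obtain i where i: "i \<in> I" by auto
    let ?I = "I - {i}"
    have rem: "\<And>h. image_mset h (mset_set I) = add_mset (h i) (image_mset h (mset_set ?I))"
      using i psubset.hyps(1) by (simp add: mset_set.remove)
    show ?thesis
    proof (cases "finv (g i) = g i")
      case True
      have "add_mset (g i) (image_mset (\<lambda>x. finv (g x)) (mset_set ?I)) = add_mset (g i) (image_mset g (mset_set ?I))"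
        using psubset.prems(2) rem[of "\<lambda>x. finv (g x)"] rem[of g] True by simp
      hence "image_mset (\<lambda>x. finv (g x)) (mset_set ?I) = image_mset g (mset_set ?I)" by simp
      then obtain P where P: "partition_on ?I P" "\<forall>S\<in>P. goodpart g S"
        using psubset.hyps(2)[of ?I] psubset.prems(1) i by auto
      have c: "cmod (snd (g i)) = 1" using True fix_cmod1[of "snd (g i)"] psubset.prems(1) i
        by (simp add: finv_def prod_eq_iff)
      have "partition_on I (insert {i} P)"
        using P(1) i by (subst partition_on_insert) (auto simp: partition_on_def disjnt_def)
      moreover have "goodpart g {i}" using c unfolding goodpart_def by auto
      ultimately show ?thesis using P(2) by blast
    next
      case False
      have "finv (g i) \<in># image_mset g (mset_set I)"
        using psubset.prems(2) rem[of "\<lambda>x. finv (g x)"] by (metis comp_apply union_single_eq_member)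
      then obtain j where j: "j \<in> I" "g j = finv (g i)" using psubset.hyps(1) by auto
      have ij: "i \<noteq> j" using j False by auto
      let ?J = "I - {i, j}"
      have fgj: "finv (g j) = g i" using j psubset.prems(1) i
        by (simp add: finv_def prod_eq_iff)
      have rem2: "\<And>h. image_mset h (mset_set I) = add_mset (h i) (add_mset (h j) (image_mset h (mset_set ?J)))"
        using i j ij psubset.hyps(1)
        by (metis (no_types, lifting) Diff_insert2 finite_Diff image_mset_add_mset insertE insert_Diff mset_set.remove rem)
      have "add_mset (g j) (add_mset (g i) (image_mset (\<lambda>x. finv (g x)) (mset_set ?J))) = add_mset (g j) (add_mset (g i) (image_mset g (mset_set ?J)))"
        using psubset.prems(2) rem2[of "\<lambda>x. finv (g x)"] rem2[of g] j(2) fgj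
        by (simp add: add_mset_commute)
      hence "image_mset (\<lambda>x. finv (g x)) (mset_set ?J) = image_mset g (mset_set ?J)" by simp
      then obtain P where P: "partition_on ?J P" "\<forall>S\<in>P. goodpart g S"
        using psubset.hyps(2)[of ?J] psubset.prems(1) i by auto
      have "inverse (cnj (snd (g i))) \<noteq> snd (g i)" using False by (simp add: finv_def prod_eq_iff)
      hence c: "cmod (snd (g i)) \<noteq> 1" using cmod1_fix by blast
      have "partition_on I (insert {i,j} P)"
        using P(1) i j by (subst partition_on_insert) (auto simp: partition_on_def disjnt_def)
      moreover have "goodpart g {i,j}" unfolding goodpart_def using c ij j psubset.prems(1) i
        by (intro disjI2 exI[of _ i] exI[of _ j]) (auto simp: finv_def)
      ultimately show ?thesis using P(2) by blast
    qed
  qed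
qed

lemma comb_main:
  assumes "\<forall>b \<in> set n_as. snd b \<noteq> 0"
  shows "blocks_pair_partition n_as \<longleftrightarrow> mset (map finv n_as) = mset n_as"
proof -
  have m: "mset (map h n_as) = image_mset (\<lambda>i. h (n_as ! i)) (mset_set {..<length n_as})" for h
  proof -
    have "map h n_as = map (\<lambda>i. h (n_as ! i)) [0..<length n_as]"
      by (rule nth_equalityI) auto
    hence "mset (map h n_as) = image_mset (\<lambda>i. h (n_as ! i)) (mset [0..<length n_as])"
      by (simp only: mset_map)
    also have "mset [0..<length n_as] = mset_set {..<length n_as}"
      by (simp add: mset_upt atLeast0LessThan)
    finally show ?thesis .
  qed
  have bp: "blocks_pair_partition n_as \<longleftrightarrow> (\<exists>P. partition_on {..<length n_as} P \<and> (\<forall>S\<in>P. goodpart (nth n_as) S))"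
    unfolding blocks_pair_partition_def goodpart_def by simp
  show ?thesis
  proof
    assume "blocks_pair_partition n_as"
    then obtain P where P: "partition_on {..<length n_as} P" "\<forall>S\<in>P. goodpart (nth n_as) S"
      using bp by auto
    have "finite P" using P(1) unfolding partition_on_def
      by (metis finite_UnionD finite_lessThan)
    from comb_dir1[OF this P] show "mset (map finv n_as) = mset n_as"
      using m[of finv] m[of id] by (simp add: comp_def)
  next
    assume "mset (map finv n_as) = mset n_as"
    hence "image_mset (\<lambda>x. finv (n_as ! x)) (mset_set {..<length n_as}) = image_mset (nth n_as) (mset_set {..<length n_as})"
      using m[of finv] m[of id] by (simp add: comp_def)
    from comb_dir2[OF _ _ this] assms show "blocks_pair_partition n_as" using bp by auto
  qed
qed

interpretation cnj_hom: comm_ring_hom cnj by unfold_locales auto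

lemma conj_mat_mult: "A \<in> carrier_mat nr n \<Longrightarrow> B \<in> carrier_mat n nc \<Longrightarrow> conj_mat (A * B) = conj_mat A * conj_mat B"
  unfolding conj_mat_def by (rule cnj_hom.mat_hom_mult)
lemma conj_mat_carrier[simp]: "A \<in> carrier_mat nr nc \<Longrightarrow> conj_mat A \<in> carrier_mat nr nc"
  unfolding conj_mat_def by auto
lemma conj_mat_one[simp]: "conj_mat (1\<^sub>m n) = 1\<^sub>m n"
  unfolding conj_mat_def by (rule cnj_hom.mat_hom_one)
lemma det_conj_mat: "det (conj_mat A) = cnj (det A)"
  unfolding conj_mat_def by (rule cnj_hom.hom_det)
lemma conj_mat_dims[simp]: "dim_row (conj_mat A) = dim_row A" "dim_col (conj_mat A) = dim_col A"
  unfolding conj_mat_def by auto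

definition cjl :: "(nat \<times> complex) list \<Rightarrow> (nat \<times> complex) list" where
  "cjl n_as = map (\<lambda>(n,a). (n, cnj a)) n_as"

lemma conj_jordan_matrix: "conj_mat (jordan_matrix n_as) = jordan_matrix (cjl n_as)"
proof (induct n_as)
  case Nil
  show ?case by (intro eq_matI) (auto simp: jordan_matrix_def cjl_def conj_mat_def)
next
  case (Cons na n_as)
  obtain n a where na: "na = (n,a)" by force
  have s: "sum_list (map fst (cjl n_as)) = sum_list (map fst n_as)"
    unfolding cjl_def by (induct n_as) auto
  have c: "cjl ((n,a) # n_as) = (n, cnj a) # cjl n_as" unfolding cjl_def by simp
  have "conj_mat (jordan_matrix ((n,a) # n_as)) = four_block_mat (jordan_block n (cnj a)) (0\<^sub>m n (sum_list (map fst n_as)))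
     (0\<^sub>m (sum_list (map fst n_as)) n) (conj_mat (jordan_matrix n_as))"
    unfolding jordan_matrix_Cons
    by (intro eq_matI) (auto simp: conj_mat_def)
  then show ?case unfolding na c jordan_matrix_Cons Cons s by simp
qed

lemma jordan_nf_conj: assumes "jordan_nf A n_as"
  shows "jordan_nf (conj_mat A) (cjl n_as)"
proof -
  from assms have z: "0 \<notin> fst ` set n_as" and s: "similar_mat A (jordan_matrix n_as)"
    unfolding jordan_nf_def by auto
  from s obtain P Q where w: "similar_mat_wit A (jordan_matrix n_as) P Q" unfolding similar_mat_def by auto
  define n where "n = dim_row A"
  note d = similar_mat_witD[OF n_def w]
  have "similar_mat (conj_mat A) (conj_mat (jordan_matrix n_as))"
  proof (rule similar_matI[of _ _ "conj_mat P" "conj_mat Q" n])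
    show "{conj_mat A, conj_mat (jordan_matrix n_as), conj_mat P, conj_mat Q} \<subseteq> carrier_mat n n"
      using d by auto
    show "conj_mat P * conj_mat Q = 1\<^sub>m n" using d by (metis conj_mat_mult conj_mat_one)
    show "conj_mat Q * conj_mat P = 1\<^sub>m n" using d by (metis conj_mat_mult conj_mat_one)
    have "conj_mat A = conj_mat (P * jordan_matrix n_as) * conj_mat Q"
      using d by (metis conj_mat_mult mult_carrier_mat)
    thus "conj_mat A = conj_mat P * conj_mat (jordan_matrix n_as) * conj_mat Q"
      using d by (metis conj_mat_mult)
  qed
  moreover have "0 \<notin> fst ` set (cjl n_as)" using z unfolding cjl_def by force
  ultimately show ?thesis unfolding jordan_nf_def conj_jordan_matrix by auto
qed

lemma pow_comm: assumes A: "A \<in> carrier_mat n n" and B: "B \<in> carrier_mat n n" and AB: "A * B = B * A"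
  shows "B * A ^\<^sub>m k = A ^\<^sub>m k * B"
proof (induct k)
  case 0
  then show ?case using A B by simp
next
  case (Suc k)
  have Ak: "A ^\<^sub>m k \<in> carrier_mat n n" using A by simp
  have "B * A ^\<^sub>m Suc k = (B * A ^\<^sub>m k) * A" using assoc_mult_mat[OF B Ak A] by simp
  also have "\<dots> = A ^\<^sub>m k * (B * A)" using Suc assoc_mult_mat[OF Ak B A] by simp
  also have "\<dots> = A ^\<^sub>m k * (A * B)" using AB by simp
  also have "\<dots> = A ^\<^sub>m Suc k * B" using assoc_mult_mat[OF Ak A B] by simp
  finally show ?case .
qed

lemma pow_mult_comm: assumes A: "A \<in> carrier_mat n n" and B: "B \<in> carrier_mat n n" and AB: "A * B = B * A"
  shows "(A * B) ^\<^sub>m k = A ^\<^sub>m k * B ^\<^sub>m k"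
proof (induct k)
  case 0
  then show ?case using A B by simp
next
  case (Suc k)
  have Ak: "A ^\<^sub>m k \<in> carrier_mat n n" using A by simp
  have Bk: "B ^\<^sub>m k \<in> carrier_mat n n" using B by simp
  have c: "A * B ^\<^sub>m k = B ^\<^sub>m k * A" using pow_comm[OF B A AB[symmetric]] .
  have "(A * B) ^\<^sub>m Suc k = (A ^\<^sub>m k * B ^\<^sub>m k) * (A * B)" using Suc by simp
  also have "\<dots> = A ^\<^sub>m k * ((B ^\<^sub>m k * A) * B)"
    using assoc_mult_mat[OF Ak Bk mult_carrier_mat[OF A B]] assoc_mult_mat[OF Bk A B] by simp
  also have "\<dots> = A ^\<^sub>m k * ((A * B ^\<^sub>m k) * B)" using c by simp
  also have "\<dots> = A ^\<^sub>m Suc k * B ^\<^sub>m Suc k"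
    using assoc_mult_mat[OF A Bk B] assoc_mult_mat[OF Ak A mult_carrier_mat[OF Bk B]] by simp
  finally show ?case .
qed

lemma one_pow_mat: "(1\<^sub>m n) ^\<^sub>m k = (1\<^sub>m n :: 'a :: semiring_1 mat)"
  by (induct k) auto

lemma smult_smult_mat: "a \<cdot>\<^sub>m (b \<cdot>\<^sub>m A) = (a * b :: 'a :: semiring_0) \<cdot>\<^sub>m A"
  by (intro eq_matI) (auto simp: mult.assoc)

lemma inv_dim_gen:
  assumes G: "G \<in> carrier_mat n n" and B: "B \<in> carrier_mat n n"
    and GB: "G * B = 1\<^sub>m n" and BG: "B * G = 1\<^sub>m n" and mu: "(\<mu>::complex) \<noteq> 0"
  shows "dim_gen_eigenspace G \<mu> k = dim_gen_eigenspace B (inverse \<mu>) k"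
proof -
  define C where "C = char_matrix B (inverse \<mu>)"
  define U where "U = (-\<mu>) \<cdot>\<^sub>m G"
  define V where "V = (- inverse \<mu>) \<cdot>\<^sub>m B"
  have Cc: "C \<in> carrier_mat n n" unfolding C_def using B by simp
  have Uc: "U \<in> carrier_mat n n" unfolding U_def using G by simp
  have Vc: "V \<in> carrier_mat n n" unfolding V_def using B by simp
  have I: "(- inverse \<mu>) \<cdot>\<^sub>m 1\<^sub>m n \<in> carrier_mat n n" by simp
  have C_eq: "C = B + (- inverse \<mu>) \<cdot>\<^sub>m 1\<^sub>m n" unfolding C_def char_matrix_def using B by simp
  have iU: "(- inverse \<mu>) \<cdot>\<^sub>m U = G" unfolding U_def smult_smult_mat using mu G
    by (intro eq_matI) auto
  have 1: "U * B = (-\<mu>) \<cdot>\<^sub>m 1\<^sub>m n" unfolding U_def mult_smult_assoc_mat[OF G B] GB ..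
  have 2: "U * ((- inverse \<mu>) \<cdot>\<^sub>m 1\<^sub>m n) = G"
    unfolding mult_smult_distrib[OF Uc one_carrier_mat] right_mult_one_mat[OF Uc] iU ..
  have 3: "B * U = (-\<mu>) \<cdot>\<^sub>m 1\<^sub>m n" unfolding U_def mult_smult_distrib[OF B G] BG ..
  have 4: "((- inverse \<mu>) \<cdot>\<^sub>m 1\<^sub>m n) * U = G"
    unfolding mult_smult_assoc_mat[OF one_carrier_mat Uc] left_mult_one_mat[OF Uc] iU ..
  have UC: "U * C = (-\<mu>) \<cdot>\<^sub>m 1\<^sub>m n + G"
    unfolding C_eq mult_add_distrib_mat[OF Uc B I] 1 2 ..
  have CU: "C * U = (-\<mu>) \<cdot>\<^sub>m 1\<^sub>m n + G"
    unfolding C_eq add_mult_distrib_mat[OF B I Uc] 3 4 ..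
  have X: "char_matrix G \<mu> = U * C" unfolding UC char_matrix_def using G
    by (intro eq_matI) auto
  have VU: "V * U = 1\<^sub>m n" unfolding V_def U_def mult_smult_assoc_mat[OF B smult_carrier_mat[OF G]]
      mult_smult_distrib[OF B G] BG smult_smult_mat using mu by (intro eq_matI) auto
  have UV: "U * V = 1\<^sub>m n" unfolding V_def U_def mult_smult_assoc_mat[OF G smult_carrier_mat[OF B]]
      mult_smult_distrib[OF G B] GB smult_smult_mat using mu by (intro eq_matI) auto
  have VUk: "V ^\<^sub>m k * U ^\<^sub>m k = 1\<^sub>m n"
    using pow_mult_comm[OF Vc Uc, of k] VU UV one_pow_mat by metis
  have Xk: "char_matrix G \<mu> ^\<^sub>m k = U ^\<^sub>m k * C ^\<^sub>m k"
    unfolding X by (rule pow_mult_comm[OF Uc Cc]) (simp add: UC CU)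
  have Ckc: "C ^\<^sub>m k \<in> carrier_mat n n" using Cc by simp
  have Ukc: "U ^\<^sub>m k \<in> carrier_mat n n" using Uc by simp
  have Vkc: "V ^\<^sub>m k \<in> carrier_mat n n" using Vc by simp
  have dc: "dim_col (U ^\<^sub>m k * C ^\<^sub>m k) = n" by (rule carrier_matD(2)[OF mult_carrier_mat[OF Ukc Ckc]])
  have "dim_gen_eigenspace G \<mu> k = kernel.dim n (U ^\<^sub>m k * C ^\<^sub>m k)"
    unfolding dim_gen_eigenspace_def Xk kernel_dim_def dc ..
  also have "\<dots> = kernel.dim n (C ^\<^sub>m k)"
    unfolding mat_kernel_mult_eq[OF Ckc Ukc Vkc VUk] ..
  also have "\<dots> = dim_gen_eigenspace B (inverse \<mu>) k"
    unfolding dim_gen_eigenspace_def kernel_dim_def C_def[symmetric] carrier_matD(2)[OF Ckc] ..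
  finally show ?thesis .
qed

lemma inv_dim_gen0:
  assumes G: "G \<in> carrier_mat n n" and B: "B \<in> carrier_mat n n"
    and BG: "B * G = 1\<^sub>m n"
  shows "dim_gen_eigenspace G (0::complex) k = 0"
proof -
  have X: "char_matrix G 0 = G" unfolding char_matrix_def using G by (intro eq_matI) auto
  have Gkc: "G ^\<^sub>m k \<in> carrier_mat n n" using G by simp
  have Bkc: "B ^\<^sub>m k \<in> carrier_mat n n" using B by simp
  have BGk: "B ^\<^sub>m k * G ^\<^sub>m k = 1\<^sub>m n"
  proof -
    have GB: "G * B = 1\<^sub>m n" using BG G B
      by (metis mat_mult_left_right_inverse)
    show ?thesis using pow_mult_comm[OF B G, of k] BG GB one_pow_mat by metis
  qed
  have "dim_gen_eigenspace G 0 k = kernel.dim n (G ^\<^sub>m k * 1\<^sub>m n)"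
    unfolding dim_gen_eigenspace_def X kernel_dim_def right_mult_one_mat[OF Gkc] carrier_matD(2)[OF Gkc] ..
  also have "\<dots> = kernel.dim n (1\<^sub>m n :: complex mat)"
    unfolding mat_kernel_mult_eq[OF one_carrier_mat Gkc Bkc BGk] ..
  also have "\<dots> = 0" by (rule kernel_one_mat)
  finally show ?thesis .
qed

lemma jnf_self: "0 \<notin> fst ` set xs \<Longrightarrow> jordan_nf (jordan_matrix xs) (xs :: (nat \<times> 'a :: field) list)"
  unfolding jordan_nf_def by (auto intro: similar_mat_refl[OF jordan_matrix_carrier])

lemma mset_from_dim_gen:
  fixes xs ys :: "(nat \<times> 'a :: field) list"
  assumes "0 \<notin> fst ` set xs" "0 \<notin> fst ` set ys"
    and eq: "\<And>\<mu> k. dim_gen_eigenspace (jordan_matrix xs) \<mu> k = dim_gen_eigenspace (jordan_matrix ys) \<mu> k"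
  shows "mset xs = mset ys"
proof (rule multiset_eqI)
  fix x :: "nat \<times> 'a"
  obtain k \<mu> where x: "x = (k, \<mu>)" by force
  show "count (mset xs) x = count (mset ys) x"
  proof (cases "k = 0")
    case True
    then show ?thesis using assms(1,2) x by (metis count_mset_0_iff fst_conv image_eqI)
  next
    case False
    have "compute_nr_of_jordan_blocks (jordan_matrix xs) \<mu> k = compute_nr_of_jordan_blocks (jordan_matrix ys) \<mu> k"
      unfolding compute_nr_of_jordan_blocks_def eq ..
    then show ?thesis
      unfolding x count_mset count_list_eq_length_filter
        compute_nr_of_jordan_blocks[OF jnf_self[OF assms(1)] False]
        compute_nr_of_jordan_blocks[OF jnf_self[OF assms(2)] False] .
  qed
qed

lemma jordan_matrix_append: "jordan_matrix (xs @ ys) = four_block_mat (jordan_matrix xs)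
   (0\<^sub>m (sum_list (map fst xs)) (sum_list (map fst ys))) (0\<^sub>m (sum_list (map fst ys)) (sum_list (map fst xs))) (jordan_matrix ys)"
  unfolding jordan_matrix_def map_append diag_block_mat_append Let_def
  by (simp add: jordan_matrix_def[symmetric])

lemma swap_blocks_similar:
  assumes A: "A \<in> carrier_mat a a" and B: "B \<in> carrier_mat b b"
  shows "similar_mat (four_block_mat A (0\<^sub>m a b) (0\<^sub>m b a) B) (four_block_mat B (0\<^sub>m b a) (0\<^sub>m a b) (A :: 'c :: comm_ring_1 mat))"
proof -
  define P where "P = four_block_mat (0\<^sub>m a b) (1\<^sub>m a) (1\<^sub>m b) (0\<^sub>m b a :: 'c mat)"
  define Q where "Q = four_block_mat (0\<^sub>m b a) (1\<^sub>m b) (1\<^sub>m a) (0\<^sub>m a b :: 'c mat)"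
  have Pc: "P \<in> carrier_mat (a + b) (b + a)" unfolding P_def by (rule four_block_carrier_mat) auto
  have Qc: "Q \<in> carrier_mat (b + a) (a + b)" unfolding Q_def by (rule four_block_carrier_mat) auto
  have PQ: "P * Q = 1\<^sub>m (a + b)" unfolding P_def Q_def
    by (subst mult_four_block_mat[OF zero_carrier_mat one_carrier_mat one_carrier_mat zero_carrier_mat zero_carrier_mat one_carrier_mat one_carrier_mat zero_carrier_mat]) auto
  have QP: "Q * P = 1\<^sub>m (b + a)" unfolding P_def Q_def
    by (subst mult_four_block_mat[OF zero_carrier_mat one_carrier_mat one_carrier_mat zero_carrier_mat zero_carrier_mat one_carrier_mat one_carrier_mat zero_carrier_mat]) auto
  have PB: "P * four_block_mat B (0\<^sub>m b a) (0\<^sub>m a b) A = four_block_mat (0\<^sub>m a b) A B (0\<^sub>m b a)"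
    unfolding P_def using A B
    by (subst mult_four_block_mat[OF zero_carrier_mat one_carrier_mat one_carrier_mat zero_carrier_mat B zero_carrier_mat zero_carrier_mat A]) auto
  have PBQ: "four_block_mat (0\<^sub>m a b) A B (0\<^sub>m b a) * Q = four_block_mat A (0\<^sub>m a b) (0\<^sub>m b a) B"
    unfolding Q_def using A B
    by (subst mult_four_block_mat[OF zero_carrier_mat A B zero_carrier_mat zero_carrier_mat one_carrier_mat one_carrier_mat zero_carrier_mat]) auto
  show ?thesis
  proof (rule similar_matI[of _ _ P Q "a + b"])
    show "{four_block_mat A (0\<^sub>m a b) (0\<^sub>m b a) B, four_block_mat B (0\<^sub>m b a) (0\<^sub>m a b) A, P, Q} \<subseteq> carrier_mat (a + b) (a + b)"
      using A B Pc Qc by (auto simp: add.commute)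
    show "P * Q = 1\<^sub>m (a + b)" by (rule PQ)
    show "Q * P = 1\<^sub>m (a + b)" using QP by (simp add: add.commute)
    show "four_block_mat A (0\<^sub>m a b) (0\<^sub>m b a) B = P * four_block_mat B (0\<^sub>m b a) (0\<^sub>m a b) A * Q"
      unfolding PB PBQ ..
  qed
qed

lemma jordan_matrix_swap: "similar_mat (jordan_matrix (xs @ ys)) (jordan_matrix (ys @ xs :: (nat \<times> 'a :: comm_ring_1) list))"
  unfolding jordan_matrix_append by (rule swap_blocks_similar) auto

lemma jordan_matrix_perm:
  "mset xs = mset ys \<Longrightarrow> similar_mat (jordan_matrix xs) (jordan_matrix (ys :: (nat \<times> 'a :: comm_ring_1) list))"
proof (induct xs arbitrary: ys)
  case Nil
  then show ?case by (auto intro: similar_mat_refl[OF jordan_matrix_carrier])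
next
  case (Cons x xs)
  have "x \<in> set ys" using Cons.prems by (metis list.set_intros(1) set_mset_mset)
  then obtain us vs where ys: "ys = us @ x # vs" by (meson split_list)
  have "mset xs = mset (us @ vs)" using Cons.prems ys by simp
  hence IH: "similar_mat (jordan_matrix xs) (jordan_matrix (us @ vs))" by (rule Cons.hyps)
  obtain n a where x: "x = (n, a)" by force
  have s: "sum_list (map fst (us @ vs)) = sum_list (map fst xs)"
    using \<open>mset xs = mset (us @ vs)\<close> by (metis mset_map sum_mset_sum_list)
  have 1: "similar_mat (jordan_matrix (x # xs)) (jordan_matrix (x # us @ vs))"
    unfolding x jordan_matrix_Cons s
    by (rule similar_mat_four_block_0_0[OF similar_mat_refl IH]) auto
  have s2: "sum_list (map fst (us @ [x])) = sum_list (map fst ([x] @ us))" by simp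
  have 2: "similar_mat (jordan_matrix (([x] @ us) @ vs)) (jordan_matrix ((us @ [x]) @ vs))"
    unfolding jordan_matrix_append[of "[x] @ us"] jordan_matrix_append[of "us @ [x]"] s2
    by (rule similar_mat_four_block_0_0[OF jordan_matrix_swap similar_mat_refl]) (auto simp: add.commute)
  show ?case using similar_mat_trans[OF 1] 2 ys by simp
qed

lemma complex_root_exists: assumes "(z::complex) \<noteq> 0" "n > 0" shows "\<exists>c. c ^ n = z"
proof -
  define c where "c = rcis (root n (cmod z)) (Arg z / real n)"
  have "c ^ n = rcis (root n (cmod z) ^ n) (real n * (Arg z / real n))"
    unfolding c_def by (rule DeMoivre2)
  also have "\<dots> = rcis (cmod z) (Arg z)" using assms by simp
  also have "\<dots> = z" by (rule rcis_cmod_Arg)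
  finally show ?thesis by blast
qed

lemma filter_finv_cjl:
  "map fst [(n, e)\<leftarrow>map finv xs . e = \<mu>] = map fst [(n, e)\<leftarrow>cjl xs . e = inverse \<mu>]"
proof -
  have iff: "inverse x = \<mu> \<longleftrightarrow> x = inverse \<mu>" for x :: complex by (metis inverse_inverse_eq)
  show ?thesis by (induct xs) (auto simp: finv_def cjl_def iff)
qed

lemma key_dim:
  assumes Ac: "A \<in> carrier_mat n n" and jnf: "jordan_nf A n_as"
    and nz: "\<forall>b \<in> set n_as. snd b \<noteq> 0"
    and Gc: "ginv \<in> carrier_mat n n" and GA: "ginv * conj_mat A = 1\<^sub>m n" and AG: "conj_mat A * ginv = 1\<^sub>m n"
  shows "dim_gen_eigenspace ginv \<mu> k = dim_gen_eigenspace (jordan_matrix (map finv n_as)) \<mu> k"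
proof (cases "\<mu> = 0")
  case True
  have cA: "conj_mat A \<in> carrier_mat n n" using Ac by simp
  have "[(n, e)\<leftarrow>map finv n_as . e = 0] = []"
    using nz by (auto simp: filter_empty_conv finv_def)
  hence "dim_gen_eigenspace (jordan_matrix (map finv n_as)) \<mu> k = 0"
    unfolding dim_gen_eigenspace_jordan_matrix True by simp
  moreover have "dim_gen_eigenspace ginv \<mu> k = 0"
    unfolding True by (rule inv_dim_gen0[OF Gc cA AG])
  ultimately show ?thesis by simp
next
  case False
  have cA: "conj_mat A \<in> carrier_mat n n" using Ac by simp
  have "dim_gen_eigenspace ginv \<mu> k = dim_gen_eigenspace (conj_mat A) (inverse \<mu>) k"
    by (rule inv_dim_gen[OF Gc cA GA AG False])
  also have "\<dots> = (\<Sum> n \<leftarrow> map fst [(n, e)\<leftarrow>cjl n_as . e = inverse \<mu>]. min k n)"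
    by (rule dim_gen_eigenspace[OF jordan_nf_conj[OF jnf]])
  also have "\<dots> = dim_gen_eigenspace (jordan_matrix (map finv n_as)) \<mu> k"
    unfolding dim_gen_eigenspace_jordan_matrix filter_finv_cjl ..
  finally show ?thesis .
qed

lemma smult_one_mat': "(1::'a::semiring_1) \<cdot>\<^sub>m X = X"
  by (intro eq_matI) auto

lemma smult_sandwich:
  assumes X: "X \<in> carrier_mat n n" and Y: "Y \<in> carrier_mat n n" and Z: "Z \<in> carrier_mat n n"
    and c: "(c::complex) \<noteq> 0"
  shows "(c \<cdot>\<^sub>m X) * Y * (inverse c \<cdot>\<^sub>m Z) = X * Y * Z"
proof -
  have "(c \<cdot>\<^sub>m X) * Y * (inverse c \<cdot>\<^sub>m Z) = c \<cdot>\<^sub>m (X * Y) * (inverse c \<cdot>\<^sub>m Z)"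
    unfolding mult_smult_assoc_mat[OF X Y] ..
  also have "\<dots> = c \<cdot>\<^sub>m ((X * Y) * (inverse c \<cdot>\<^sub>m Z))"
    by (rule mult_smult_assoc_mat[OF mult_carrier_mat[OF X Y] smult_carrier_mat[OF Z]])
  also have "\<dots> = (c * inverse c) \<cdot>\<^sub>m (X * Y * Z)"
    unfolding mult_smult_distrib[OF mult_carrier_mat[OF X Y] Z] smult_smult_mat ..
  finally show ?thesis using c by (simp add: smult_one_mat')
qed

lemma smult_pair:
  assumes X: "X \<in> carrier_mat n n" and Z: "Z \<in> carrier_mat n n"
    and c: "(c::complex) \<noteq> 0"
  shows "(c \<cdot>\<^sub>m X) * (inverse c \<cdot>\<^sub>m Z) = X * Z"
proof -
  have "(c \<cdot>\<^sub>m X) * (inverse c \<cdot>\<^sub>m Z) = c \<cdot>\<^sub>m (X * (inverse c \<cdot>\<^sub>m Z))"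
    by (rule mult_smult_assoc_mat[OF X smult_carrier_mat[OF Z]])
  also have "\<dots> = (c * inverse c) \<cdot>\<^sub>m (X * Z)"
    unfolding mult_smult_distrib[OF X Z] smult_smult_mat ..
  finally show ?thesis using c by (simp add: smult_one_mat')
qed

theorem proposition3p1:
  fixes A :: "complex mat" and n :: nat and n_as :: "(nat \<times> complex) list"
  assumes "A \<in> SL n"
    and "jordan_nf A n_as"
    and "\<forall>b \<in> set n_as. snd b \<noteq> 0"
  shows "c_reversible n A \<longleftrightarrow> blocks_pair_partition n_as"
proof -
  note jnf = assms(2) and nz = assms(3)
  have Ac: "A \<in> carrier_mat n n" and dA: "det A = 1" using assms(1) unfolding SL_def by auto
  have cA: "conj_mat A \<in> carrier_mat n n" using Ac by simp
  have z: "0 \<notin> fst ` set n_as" using jnf unfolding jordan_nf_def by auto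
  have "fst ` set (map finv n_as) = fst ` set n_as" by (simp add: image_image finv_def)
  hence z': "0 \<notin> fst ` set (map finv n_as)" using z by simp
  have dA_J: "dim_gen_eigenspace A = dim_gen_eigenspace (jordan_matrix n_as)"
    using jnf unfolding jordan_nf_def by (intro dim_gen_eigenspace_similar) auto
  have "c_reversible n A \<longleftrightarrow> mset (map finv n_as) = mset n_as"
  proof
    assume "c_reversible n A"
    then obtain h hinv ginv where h: "h \<in> SL n" and hinv: "hinv \<in> carrier_mat n n"
      and Gc: "ginv \<in> carrier_mat n n" and hh: "h * hinv = 1\<^sub>m n" "hinv * h = 1\<^sub>m n"
      and GA: "ginv * conj_mat A = 1\<^sub>m n" and AG: "conj_mat A * ginv = 1\<^sub>m n"
      and eq: "h * A * hinv = ginv"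
      unfolding c_reversible_def by blast
    have hc: "h \<in> carrier_mat n n" using h unfolding SL_def by auto
    have "similar_mat ginv A"
      by (rule similar_matI[of _ _ h hinv n]) (use hc hinv Gc Ac hh eq in auto)
    hence sim: "dim_gen_eigenspace ginv = dim_gen_eigenspace A" by (rule dim_gen_eigenspace_similar)
    show "mset (map finv n_as) = mset n_as"
    proof (rule mset_from_dim_gen[OF z' z])
      fix \<mu> k
      show "dim_gen_eigenspace (jordan_matrix (map finv n_as)) \<mu> k = dim_gen_eigenspace (jordan_matrix n_as) \<mu> k"
      proof -
        have "dim_gen_eigenspace (jordan_matrix (map finv n_as)) \<mu> k = dim_gen_eigenspace ginv \<mu> k"
          using key_dim[OF Ac jnf nz Gc GA AG, of \<mu> k] by simp
        also have "\<dots> = dim_gen_eigenspace A \<mu> k" using sim by simp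
        also have "\<dots> = dim_gen_eigenspace (jordan_matrix n_as) \<mu> k" using dA_J by simp
        finally show ?thesis .
      qed
    qed
  next
    assume ms: "mset (map finv n_as) = mset n_as"
    have "det (conj_mat A) = 1" unfolding det_conj_mat dA by simp
    from det_non_zero_imp_unit[OF cA, of "()", unfolded this]
    obtain ginv where Gc: "ginv \<in> carrier_mat n n" and GA: "ginv * conj_mat A = 1\<^sub>m n"
      and AG: "conj_mat A * ginv = 1\<^sub>m n"
      unfolding Units_def ring_mat_def by auto
    from char_poly_factorized[OF Gc] obtain as where "char_poly ginv = (\<Prod> a \<leftarrow> as. [:- a, 1:])" by auto
    from jordan_nf_exists[OF Gc this] obtain m_bs where jG: "jordan_nf ginv m_bs" by auto
    have zm: "0 \<notin> fst ` set m_bs" using jG unfolding jordan_nf_def by auto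
    have dG: "dim_gen_eigenspace ginv = dim_gen_eigenspace (jordan_matrix m_bs)"
      using jG unfolding jordan_nf_def by (intro dim_gen_eigenspace_similar) auto
    have "mset m_bs = mset (map finv n_as)"
    proof (rule mset_from_dim_gen[OF zm z'])
      fix \<mu> k
      show "dim_gen_eigenspace (jordan_matrix m_bs) \<mu> k = dim_gen_eigenspace (jordan_matrix (map finv n_as)) \<mu> k"
      proof -
        have "dim_gen_eigenspace (jordan_matrix m_bs) \<mu> k = dim_gen_eigenspace ginv \<mu> k" using dG by simp
        also have "\<dots> = dim_gen_eigenspace (jordan_matrix (map finv n_as)) \<mu> k"
          using key_dim[OF Ac jnf nz Gc GA AG, of \<mu> k] by simp
        finally show ?thesis .
      qed
    qed
    with ms have "mset n_as = mset m_bs" by simp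
    hence "similar_mat (jordan_matrix n_as) (jordan_matrix m_bs)" by (rule jordan_matrix_perm)
    moreover have "similar_mat A (jordan_matrix n_as)" using jnf unfolding jordan_nf_def by auto
    moreover have "similar_mat (jordan_matrix m_bs) ginv" using jG unfolding jordan_nf_def
      by (auto intro: similar_mat_sym)
    ultimately have "similar_mat A ginv" using similar_mat_trans by blast
    then obtain P Q where w: "similar_mat_wit A ginv P Q" unfolding similar_mat_def by auto
    note d = similar_mat_witD2[OF Ac w]
    have Pc: "P \<in> carrier_mat n n" and Qc: "Q \<in> carrier_mat n n" using d by auto
    have "det Q * det P = 1" using d(2) det_mult[OF Qc Pc] by simp
    hence dQ: "det Q \<noteq> 0" by auto
    obtain c where c: "c ^ n * det Q = 1" "c \<noteq> 0"
    proof (cases "n = 0")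
      case True
      hence "det Q = 1" using Qc by simp
      thus ?thesis using that[of 1] True by simp
    next
      case False
      from complex_root_exists[of "inverse (det Q)" n] dQ False
      obtain c where "c ^ n = inverse (det Q)" by auto
      moreover have "c \<noteq> 0"
      proof
        assume "c = 0"
        hence "inverse (det Q) = 0" using \<open>c ^ n = inverse (det Q)\<close> False by (simp add: power_0_left)
        thus False using dQ by simp
      qed
      ultimately show ?thesis using that[of c] dQ by simp
    qed
    define h where "h = c \<cdot>\<^sub>m Q"
    define hinv where "hinv = inverse c \<cdot>\<^sub>m P"
    have hc: "h \<in> carrier_mat n n" unfolding h_def using Qc by simp
    have hinvc: "hinv \<in> carrier_mat n n" unfolding hinv_def using Pc by simp
    have "det h = 1" unfolding h_def det_smult using Qc c(1) by simp
    hence hSL: "h \<in> SL n" unfolding SL_def using hc by simp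
    have h1: "h * hinv = 1\<^sub>m n" unfolding h_def hinv_def smult_pair[OF Qc Pc c(2)] using d by simp
    have h2: "hinv * h = 1\<^sub>m n" using smult_pair[OF Pc Qc, of "inverse c"] c(2) d
      unfolding h_def hinv_def by simp
    have GQc: "ginv * Q \<in> carrier_mat n n" using Gc Qc by simp
    have e1: "Q * (P * ginv * Q) = (Q * P) * (ginv * Q)"
      unfolding assoc_mult_mat[OF Pc Gc Qc] assoc_mult_mat[OF Qc Pc GQc] ..
    have e2: "(Q * P) * (ginv * Q) = ginv * Q" unfolding d(2) by (rule left_mult_one_mat[OF GQc])
    have e3: "ginv * Q * P = ginv" unfolding assoc_mult_mat[OF Gc Qc Pc] d(2) by (rule right_mult_one_mat[OF Gc])
    have "h * A * hinv = Q * A * P" unfolding h_def hinv_def by (rule smult_sandwich[OF Qc Ac Pc c(2)])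
    also have "\<dots> = Q * (P * ginv * Q) * P" using d(3) by simp
    also have "\<dots> = ginv" unfolding e1 e2 e3 ..
    finally have "h * A * hinv = ginv" .
    thus "c_reversible n A" unfolding c_reversible_def
      using hSL hinvc Gc h1 h2 GA AG by blast
  qed
  also have "\<dots> \<longleftrightarrow> blocks_pair_partition n_as" using comb_main[OF nz] by simp
  finally show ?thesis .
qed

end
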